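(* Let $d\ge 2$, $2\le k\le d+1$, and let $y_1,\dots,y_N\in\{1,\dots,k\}$ be labels of a class-balanced dataset (each class has exactly $N/k\ge1$ samples). Let $s>0$, $\alpha_1\ge\frac12$, $\alpha_2\le\alpha_1$, $\beta_1,\beta_2\in\mathbb R$. For $\boldsymbol w_1,\dots,\boldsymbol w_k,\boldsymbol z_1,\dots,\boldsymbol z_N\in\mathbb S^{d-1}$ define the GM-Softmax empirical risk $$L=\frac1N\sum_{i=1}^N-\log\frac{\exp(s(\alpha_1\boldsymbol w_{y_i}^{\mathrm T}\boldsymbol z_i+\beta_1))}{\exp(s(\alpha_2\boldsymbol w_{y_i}^{\mathrm T}\boldsymbol z_i+\beta_2))+\sum_{j\ne y_i}\exp(s\boldsymbol w_j^{\mathrm T}\boldsymbol z_i)}.$$ Then for all such configurations $$L\ge \log\Big[\exp\big(s(\alpha_2-\alpha_1+\beta_2-\beta_1)\big)+(k-1)\exp\big(-s(\tfrac1{k-1}+\alpha_1+\beta_1)\big)\Big],$$ with equality if and only if $\boldsymbol w_i^{\mathrm T}\boldsymbol w_j=-\frac1{k-1}$ for all $i\ne j$ and $\boldsymbol z_i=\boldsymbol w_{y_i}$ for all $i$. Consequently every minimizer of $L$ has the largest possible class margin $m_c=\arccos\frac{-1}{k-1}$ and the largest possible minimal sample margin $\gamma_{\min}=\frac{k}{k-1}$.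
   Context: $\mathbb S^{d-1}$ is the unit sphere in $\mathbb R^d$. Class margin: $m_c(\{\boldsymbol w_i\})=\arccos\big[\max_{i\ne j}\boldsymbol w_i^{\mathrm T}\boldsymbol w_j\big]$ for unit prototypes. Minimal sample margin: $\gamma_{\min}=\min_i\big(\boldsymbol w_{y_i}^{\mathrm T}\boldsymbol z_i-\max_{j\ne y_i}\boldsymbol w_j^{\mathrm T}\boldsymbol z_i\big)$. *)

theory Defs
  imports "HOL-Analysis.Analysis"
begin

text \<open>Classes are 1..k, samples are indexed 0..N-1. Prototypes w :: nat => 'a,
  features z :: nat => 'a, labels y :: nat => nat.\<close>

definition unit_config :: "nat \<Rightarrow> nat \<Rightarrow> (nat \<Rightarrow> 'a::real_inner) \<Rightarrow> (nat \<Rightarrow> 'a) \<Rightarrow> bool" where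
  "unit_config k N w z \<longleftrightarrow> (\<forall>j\<in>{1..k}. norm (w j) = 1) \<and> (\<forall>i<N. norm (z i) = 1)"

definition gm_softmax_loss ::
  "real \<Rightarrow> real \<Rightarrow> real \<Rightarrow> real \<Rightarrow> real \<Rightarrow> nat \<Rightarrow> nat \<Rightarrow> (nat \<Rightarrow> nat)
   \<Rightarrow> (nat \<Rightarrow> 'a::real_inner) \<Rightarrow> (nat \<Rightarrow> 'a) \<Rightarrow> real" where
  "gm_softmax_loss s a1 a2 b1 b2 k N y w z =
     (1 / real N) * (\<Sum>i<N.
        - ln (exp (s * (a1 * (w (y i) \<bullet> z i) + b1)) /
              (exp (s * (a2 * (w (y i) \<bullet> z i) + b2)) +
               (\<Sum>j\<in>{1..k} - {y i}. exp (s * (w j \<bullet> z i))))))"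

definition class_margin :: "nat \<Rightarrow> (nat \<Rightarrow> 'a::real_inner) \<Rightarrow> real" where
  "class_margin k w = arccos (Max {w i \<bullet> w j | i j. i \<in> {1..k} \<and> j \<in> {1..k} \<and> i \<noteq> j})"

definition min_sample_margin ::
  "nat \<Rightarrow> nat \<Rightarrow> (nat \<Rightarrow> nat) \<Rightarrow> (nat \<Rightarrow> 'a::real_inner) \<Rightarrow> (nat \<Rightarrow> 'a) \<Rightarrow> real" where
  "min_sample_margin k N y w z =
     Min ((\<lambda>i. w (y i) \<bullet> z i - Max ((\<lambda>j. w j \<bullet> z i) ` ({1..k} - {y i}))) ` {..<N})"

end

theory Submission
  imports Defs
begin


context
  fixes k N :: nat and y :: "nat \<Rightarrow> nat"
  assumes labels: "\<forall>i<N. y i \<in> {1..k}"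
    and bal: "\<forall>c\<in>{1..k}. card {i. i < N \<and> y i = c} = N div k"
begin

lemma sum_labels: "(\<Sum>i<N. f (y i)) = real (N div k) * (\<Sum>c\<in>{1..k}. f c)" for f :: "nat \<Rightarrow> real"
proof -
  have "(\<Sum>i<N. f (y i)) = (\<Sum>c\<in>{1..k}. \<Sum>i\<in>{x. x \<in> {..<N} \<and> y x = c}. f (y i))"
    by (rule sum.group[symmetric]) (use labels in auto)
  also have "\<dots> = (\<Sum>c\<in>{1..k}. real (N div k) * f c)"
  proof (rule sum.cong[OF refl])
    fix c assume c: "c \<in> {1..k}"
    have "(\<Sum>i\<in>{x. x \<in> {..<N} \<and> y x = c}. f (y i)) = (\<Sum>i\<in>{x. x \<in> {..<N} \<and> y x = c}. f c)"
      by (rule sum.cong) auto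
    also have "\<dots> = real (card {i. i < N \<and> y i = c}) * f c" by simp
    finally show "(\<Sum>i\<in>{x. x \<in> {..<N} \<and> y x = c}. f (y i)) = real (N div k) * f c"
      using bal c by simp
  qed
  finally show ?thesis by (simp add: sum_distrib_left)
qed

lemma geom:
  fixes w z :: "nat \<Rightarrow> 'a::real_inner" and lam :: real
  assumes lam: "lam > 0" and kdvd: "k dvd N" and k0: "k > 0"
    and wn: "\<forall>c\<in>{1..k}. norm (w c) = 1" and zn: "\<forall>i<N. norm (z i) = 1"
  defines "W \<equiv> (\<Sum>c\<in>{1..k}. w c)"
  shows "(\<Sum>i<N. (W - lam *\<^sub>R w (y i)) \<bullet> z i) =
     - real N * lam + (1/(2*lam)) * (\<Sum>i<N. (norm (W - lam *\<^sub>R w (y i) + lam *\<^sub>R z i))\<^sup>2)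
     + real N * (norm W)\<^sup>2 * (2*lam - real k) / (2*lam*real k)"
proof -
  have per: "(W - lam *\<^sub>R w (y i)) \<bullet> z i = (1/(2*lam)) * (norm (W - lam *\<^sub>R w (y i) + lam *\<^sub>R z i))\<^sup>2
      - (norm W)\<^sup>2 / (2*lam) + W \<bullet> w (y i) - lam" if i: "i < N" for i
  proof -
    have wy: "w (y i) \<bullet> w (y i) = 1" using wn labels i by (simp add: dot_square_norm)
    have zz: "z i \<bullet> z i = 1" using zn i by (simp add: dot_square_norm)
    have "(norm (W - lam *\<^sub>R w (y i) + lam *\<^sub>R z i))\<^sup>2 =
       W \<bullet> W - 2*lam * (W \<bullet> w (y i)) + 2*lam* (W \<bullet> z i) + lam^2 * (w (y i) \<bullet> w (y i))
       - 2*lam^2 * (w (y i) \<bullet> z i) + lam^2 * (z i \<bullet> z i)"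
      unfolding power2_norm_eq_inner
      by (simp add: inner_add_left inner_add_right inner_diff_left inner_diff_right
           inner_commute algebra_simps power2_eq_square)
    then show ?thesis using lam wy zz unfolding power2_norm_eq_inner[of W]
      by (simp add: power2_norm_eq_inner inner_diff_left field_simps power2_eq_square)
  qed
  have "(\<Sum>i<N. (W - lam *\<^sub>R w (y i)) \<bullet> z i) = (\<Sum>i<N. (1/(2*lam)) * (norm (W - lam *\<^sub>R w (y i) + lam *\<^sub>R z i))\<^sup>2
      - (norm W)\<^sup>2 / (2*lam) + W \<bullet> w (y i) - lam)"
    by (rule sum.cong) (auto simp: per)
  also have "\<dots> = (1/(2*lam)) * (\<Sum>i<N. (norm (W - lam *\<^sub>R w (y i) + lam *\<^sub>R z i))\<^sup>2)
      - real N * (norm W)\<^sup>2 / (2*lam) + (\<Sum>i<N. W \<bullet> w (y i)) - real N * lam"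
    by (simp add: sum.distrib sum_subtractf sum_distrib_left)
  also have "(\<Sum>i<N. W \<bullet> w (y i)) = real (N div k) * (\<Sum>c\<in>{1..k}. W \<bullet> w c)"
    by (rule sum_labels)
  also have "(\<Sum>c\<in>{1..k}. W \<bullet> w c) = (norm W)\<^sup>2"
    by (simp add: W_def inner_sum_right power2_norm_eq_inner)
  also have "real (N div k) = real N / real k" using kdvd k0 by (simp add: real_of_nat_div)
  finally have X: "(\<Sum>i<N. (W - lam *\<^sub>R w (y i)) \<bullet> z i) = 1 / (2 * lam) * (\<Sum>i<N. (norm (W - lam *\<^sub>R w (y i) + lam *\<^sub>R z i))\<^sup>2) -
    real N * (norm W)\<^sup>2 / (2 * lam) + real N / real k * (norm W)\<^sup>2 - real N * lam" .
  show ?thesis unfolding X using lam k0 by (simp add: field_simps)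
qed

end


lemma exp_strict: fixes x :: real assumes "x \<noteq> 0" shows "1 + x < exp x"
proof (cases "1 + x/2 \<ge> 0")
  case True
  have "(1 + x/2)^2 \<le> (exp (x/2))^2" using True exp_ge_add_one_self[of "x/2"]
    by (intro power_mono) auto
  also have "(exp (x/2))^2 = exp x" by (simp add: power2_eq_square flip: exp_add)
  finally have "(1 + x/2)^2 \<le> exp x" .
  moreover have "0 < x^2" using assms by simp
  moreover have "(1 + x/2)^2 = 1 + x + x^2/4" by (simp add: power2_eq_square algebra_simps)
  ultimately show ?thesis by linarith
next
  case False
  then have "1 + x < 0" by simp
  then show ?thesis using exp_gt_zero[of x] by linarith
qed

lemma exp_tangent: fixes x mu :: real shows "exp mu * (1 + (x - mu)) \<le> exp x"
proof -
  have "exp mu * (1 + (x - mu)) \<le> exp mu * exp (x - mu)"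
    by (intro mult_left_mono) auto
  then show ?thesis by (simp flip: exp_add)
qed

lemma exp_tangent_eq: fixes x mu :: real
  shows "exp mu * (1 + (x - mu)) = exp x \<longleftrightarrow> x = mu"
proof
  assume h: "exp mu * (1 + (x - mu)) = exp x"
  show "x = mu"
  proof (rule ccontr)
    assume "x \<noteq> mu"
    then have "1 + (x - mu) < exp (x - mu)" by (intro exp_strict) auto
    then have "exp mu * (1 + (x - mu)) < exp mu * exp (x - mu)" by simp
    then show False using h by (simp flip: exp_add)
  qed
qed simp


lemma exp_sum_ge:
  fixes x :: "'b \<Rightarrow> real" and J :: "'b set"
  assumes "finite J" "J \<noteq> {}"
  defines "mu \<equiv> (\<Sum>j\<in>J. x j) / real (card J)"
  shows "real (card J) * exp mu \<le> (\<Sum>j\<in>J. exp (x j))"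
    and "real (card J) * exp mu = (\<Sum>j\<in>J. exp (x j)) \<Longrightarrow> (\<forall>j\<in>J. x j = mu)"
proof -
  have c: "real (card J) > 0" using assms(1,2) by (simp add: card_gt_0_iff)
  have "(\<Sum>j\<in>J. x j - mu) = (\<Sum>j\<in>J. x j) - real (card J) * mu" by (simp add: sum_subtractf)
  also have "\<dots> = 0" using c unfolding mu_def by simp
  finally have s0: "(\<Sum>j\<in>J. x j - mu) = 0" .
  have "(\<Sum>j\<in>J. exp mu * (1 + (x j - mu))) = exp mu * (\<Sum>j\<in>J. 1 + (x j - mu))"
    by (rule sum_distrib_left[symmetric])
  also have "(\<Sum>j\<in>J. 1 + (x j - mu)) = real (card J) + (\<Sum>j\<in>J. x j - mu)" by (simp add: sum.distrib)
  finally have s1: "(\<Sum>j\<in>J. exp mu * (1 + (x j - mu))) = real (card J) * exp mu" using s0 by simp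
  have eqd: "(\<Sum>j\<in>J. exp (x j) - exp mu * (1 + (x j - mu))) = (\<Sum>j\<in>J. exp (x j)) - real (card J) * exp mu"
    by (simp only: sum_subtractf s1)
  have nn: "\<forall>j\<in>J. 0 \<le> exp (x j) - exp mu * (1 + (x j - mu))"
    using exp_tangent[of mu] by (simp only: diff_ge_0_iff_ge) blast
  have "0 \<le> (\<Sum>j\<in>J. exp (x j) - exp mu * (1 + (x j - mu)))"
    by (rule sum_nonneg) (use nn in blast)
  then show "real (card J) * exp mu \<le> (\<Sum>j\<in>J. exp (x j))" unfolding eqd by simp
  assume eq: "real (card J) * exp mu = (\<Sum>j\<in>J. exp (x j))"
  have z: "(\<Sum>j\<in>J. exp (x j) - exp mu * (1 + (x j - mu))) = 0"
    using eqd eq by linarith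
  have iff: "(\<Sum>j\<in>J. exp (x j) - exp mu * (1 + (x j - mu))) = 0 \<longleftrightarrow> (\<forall>j\<in>J. exp (x j) - exp mu * (1 + (x j - mu)) = 0)"
    by (rule sum_nonneg_eq_0_iff[OF assms(1)]) (use nn in blast)
  have "\<forall>j\<in>J. exp (x j) - exp mu * (1 + (x j - mu)) = 0" using z iff by blast
  then have "\<forall>j\<in>J. exp (x j) - exp mu * (1 + (x j - mu)) = 0" .
  then show "\<forall>j\<in>J. x j = mu" using exp_tangent_eq[of mu] by (metis eq_iff_diff_eq_0)
qed

definition FF :: "real \<Rightarrow> real \<Rightarrow> real \<Rightarrow> real" where
  "FF m u v = ln (exp u + m * exp v)"

lemma FF_tangent:
  fixes a b u v :: real
  assumes m: "m > 0"
  defines "p \<equiv> exp a / (exp a + m * exp b)"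
  shows "FF m a b + p * (u - a) + (1 - p) * (v - b) \<le> FF m u v"
proof -
  have D: "exp a + m * exp b > 0" using m by (simp add: add_pos_pos)
  have Nn: "exp u + m * exp v > 0" using m by (simp add: add_pos_pos)
  have p01: "0 \<le> p" "p \<le> 1" using D m unfolding p_def by (auto simp: divide_simps)
  have 1: "1 - p = m * exp b / (exp a + m * exp b)" using D unfolding p_def by (simp add: field_simps)
  have "exp (p * (u - a) + (1 - p) * (v - b)) \<le> p * exp (u - a) + (1 - p) * exp (v - b)"
    using convex_onD[OF exp_convex, of "1 - p" "u - a" "v - b"] p01 by simp
  also have "\<dots> = (exp u + m * exp v) / (exp a + m * exp b)"
  proof -
    have "p * exp (u - a) = exp u / (exp a + m * exp b)" unfolding p_def by (simp add: exp_diff)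
    moreover have "(1 - p) * exp (v - b) = m * exp v / (exp a + m * exp b)" unfolding 1 by (simp add: exp_diff)
    ultimately show ?thesis by (simp add: add_divide_distrib)
  qed
  finally have "p * (u - a) + (1 - p) * (v - b) \<le> ln ((exp u + m * exp v) / (exp a + m * exp b))"
    using D m by (subst ln_ge_iff) (auto intro!: add_pos_pos divide_pos_pos)
  also have "\<dots> = FF m u v - FF m a b" unfolding FF_def using D m Nn
    by (subst ln_div) (auto intro!: add_pos_pos)
  finally show ?thesis by simp
qed

lemma FF_mono:
  assumes m: "m > 0" and "u' \<le> u" "v' \<le> v"
  shows "FF m u' v' \<le> FF m u v"
  unfolding FF_def using assms by (subst ln_le_cancel_iff) (auto intro: add_pos_pos add_mono)

lemma FF_strict:
  assumes m: "m > 0" and "v' < v"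
  shows "FF m u v' < FF m u v"
  unfolding FF_def using assms by (subst ln_less_cancel_iff) (auto intro: add_pos_pos)


lemma inner_le_1: fixes a b :: "'a::real_inner" assumes "norm a = 1" "norm b = 1" shows "a \<bullet> b \<le> 1"
  using norm_cauchy_schwarz[of a b] assms by simp

lemma main_bound:
  fixes k N :: nat and y :: "nat \<Rightarrow> nat" and s a1 a2 b1 b2 :: real and w z :: "nat \<Rightarrow> 'a::real_inner"
  assumes labels: "\<forall>i<N. y i \<in> {1..k}"
    and bal: "\<forall>c\<in>{1..k}. card {i. i < N \<and> y i = c} = N div k"
    and kdvd: "k dvd N" and k2: "2 \<le> k" and Nk: "N div k \<ge> 1"
    and s: "s > 0" and a1: "a1 \<ge> 1/2" and a2: "a2 \<le> a1"
    and unit: "unit_config k N w z"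
  shows "FF (real k - 1) (s * (a2 - a1 + b2 - b1)) (- s * (1 / (real k - 1) + a1 + b1))
           \<le> gm_softmax_loss s a1 a2 b1 b2 k N y w z"
    and "gm_softmax_loss s a1 a2 b1 b2 k N y w z = FF (real k - 1) (s * (a2 - a1 + b2 - b1)) (- s * (1 / (real k - 1) + a1 + b1))
         \<Longrightarrow> (\<forall>i\<in>{1..k}. \<forall>j\<in>{1..k}. i \<noteq> j \<longrightarrow> w i \<bullet> w j = - 1 / (real k - 1)) \<and> (\<forall>i<N. z i = w (y i))"
proof -
  define m where "m = real k - 1"
  define K where "K = {1..k}"
  define c where "c i = w (y i) \<bullet> z i" for i
  define x where "x i j = s * (w j \<bullet> z i - a1 * c i - b1)" for i j
  define u where "u i = s * ((a2 - a1) * c i + b2 - b1)" for i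
  define mu where "mu i = (\<Sum>j\<in>K - {y i}. x i j) / m" for i
  define tm where "tm i = - ln (exp (s * (a1 * (w (y i) \<bullet> z i) + b1)) /
              (exp (s * (a2 * (w (y i) \<bullet> z i) + b2)) +
               (\<Sum>j\<in>{1..k} - {y i}. exp (s * (w j \<bullet> z i)))))" for i
  define us where "us = s * (a2 - a1 + b2 - b1)"
  define vs where "vs = - s * (1 / (real k - 1) + a1 + b1)"
  define ub where "ub = (\<Sum>i<N. u i) / real N"
  define mb where "mb = (\<Sum>i<N. mu i) / real N"
  define lam where "lam = 1 + m * a1"
  define W where "W = (\<Sum>c\<in>{1..k}. w c)"
  have m: "m > 0" "m \<ge> 1" using k2 unfolding m_def by auto
  have N: "N > 0" "real N > 0" using Nk by (auto intro: ccontr)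
  have wn: "\<forall>c\<in>{1..k}. norm (w c) = 1" and zn: "\<forall>i<N. norm (z i) = 1"
    using unit unfolding unit_config_def by auto
  have cardK: "card (K - {y i}) = k - 1" "real (card (K - {y i})) = m" "finite (K - {y i})" "K - {y i} \<noteq> {}"
    if "i < N" for i
  proof -
    show 1: "card (K - {y i}) = k - 1" using labels that unfolding K_def by (simp add: card_Diff_singleton)
    show "real (card (K - {y i})) = m" unfolding 1 m_def using k2 by (simp add: of_nat_diff)
    show "finite (K - {y i})" unfolding K_def by simp
    have "card (K - {y i}) > 0" using 1 k2 by linarith
    then show "K - {y i} \<noteq> {}" by (metis card.empty less_irrefl)
  qed
  have loss: "gm_softmax_loss s a1 a2 b1 b2 k N y w z = (\<Sum>i<N. tm i) / real N"
    unfolding gm_softmax_loss_def tm_def by simp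
  have step1: "tm i = ln (exp (u i) + (\<Sum>j\<in>K - {y i}. exp (x i j)))" if i: "i < N" for i
  proof -
    define A where "A = exp (s * (a1 * c i + b1))"
    define B where "B = exp (s * (a2 * c i + b2)) + (\<Sum>j\<in>K - {y i}. exp (s * (w j \<bullet> z i)))"
    have A: "A > 0" unfolding A_def by simp
    have B: "B > 0" unfolding B_def by (intro add_pos_nonneg) (auto intro: sum_nonneg)
    have eu: "exp (u i) = exp (s * (a2 * c i + b2)) / A"
    proof -
      have "u i = s * (a2 * c i + b2) - s * (a1 * c i + b1)" unfolding u_def by (simp add: algebra_simps)
      then show ?thesis unfolding A_def by (simp only: exp_diff)
    qed
    have ex: "exp (x i j) = exp (s * (w j \<bullet> z i)) / A" for j
    proof -
      have "x i j = s * (w j \<bullet> z i) - s * (a1 * c i + b1)" unfolding x_def by (simp add: algebra_simps)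
      then show ?thesis unfolding A_def by (simp only: exp_diff)
    qed
    have "exp (u i) + (\<Sum>j\<in>K - {y i}. exp (x i j)) = B / A"
      unfolding eu ex B_def by (simp add: sum_divide_distrib add_divide_distrib)
    moreover have "tm i = - ln (A / B)" unfolding tm_def A_def B_def c_def K_def by simp
    moreover have "ln (B / A) = ln B - ln A" "ln (A / B) = ln A - ln B" using A B by (simp_all add: ln_div)
    ultimately show ?thesis by simp
  qed
  have step2: "FF m (u i) (mu i) \<le> tm i" if i: "i < N" for i
  proof -
    have "m * exp (mu i) \<le> (\<Sum>j\<in>K - {y i}. exp (x i j))"
      using exp_sum_ge(1)[OF cardK(3,4)[OF i], of "x i"] unfolding cardK(2)[OF i] mu_def by simp
    then have le: "exp (u i) + m * exp (mu i) \<le> exp (u i) + (\<Sum>j\<in>K - {y i}. exp (x i j))" by simp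
    have p: "exp (u i) + m * exp (mu i) > 0" using m by (intro add_pos_pos) auto
    show ?thesis unfolding step1[OF i] FF_def using ln_le_cancel_iff le p by (metis ln_mono)
  qed
  have step2eq: "\<forall>j\<in>K - {y i}. x i j = mu i" if i: "i < N" and e: "FF m (u i) (mu i) = tm i" for i
  proof -
    have l: "ln (exp (u i) + m * exp (mu i)) = ln (exp (u i) + (\<Sum>j\<in>K - {y i}. exp (x i j)))"
      using e unfolding step1[OF i] FF_def .
    have p1: "exp (u i) + m * exp (mu i) > 0" using m by (intro add_pos_pos) auto
    have p2: "exp (u i) + (\<Sum>j\<in>K - {y i}. exp (x i j)) > 0"
      by (intro add_pos_nonneg sum_nonneg) auto
    have "exp (u i) + m * exp (mu i) = exp (u i) + (\<Sum>j\<in>K - {y i}. exp (x i j))"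
      using ln_inj_iff[OF p1 p2] l by blast
    then have "real (card (K - {y i})) * exp ((\<Sum>j\<in>K - {y i}. x i j) / real (card (K - {y i}))) = (\<Sum>j\<in>K - {y i}. exp (x i j))"
      unfolding cardK(2)[OF i] mu_def by simp
    from exp_sum_ge(2)[OF cardK(3,4)[OF i], of "x i", OF this]
    show ?thesis unfolding cardK(2)[OF i] mu_def .
  qed
  have step3: "FF m ub mb \<le> (\<Sum>i<N. FF m (u i) (mu i)) / real N"
  proof -
    define p where "p = exp ub / (exp ub + m * exp mb)"
    have t: "FF m ub mb + p * (u i - ub) + (1 - p) * (mu i - mb) \<le> FF m (u i) (mu i)" for i
      unfolding p_def by (rule FF_tangent) (use m in auto)
    have "(\<Sum>i<N. FF m ub mb + p * (u i - ub) + (1 - p) * (mu i - mb)) \<le> (\<Sum>i<N. FF m (u i) (mu i))"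
      by (rule sum_mono) (rule t)
    moreover have "(\<Sum>i<N. FF m ub mb + p * (u i - ub) + (1 - p) * (mu i - mb))
       = real N * FF m ub mb + p * ((\<Sum>i<N. u i) - real N * ub) + (1 - p) * ((\<Sum>i<N. mu i) - real N * mb)"
      by (simp add: sum.distrib sum_distrib_left sum_subtractf algebra_simps)
    moreover have "(\<Sum>i<N. u i) - real N * ub = 0" "(\<Sum>i<N. mu i) - real N * mb = 0"
      unfolding ub_def mb_def using N by auto
    ultimately have "real N * FF m ub mb \<le> (\<Sum>i<N. FF m (u i) (mu i))" by simp
    then show ?thesis using N by (simp add: field_simps)
  qed
  have step4: "us \<le> ub"
  proof -
    have "us \<le> u i" if i: "i < N" for i
    proof -
      have "c i \<le> 1" unfolding c_def using wn zn labels i by (intro inner_le_1) auto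
      then have "0 \<le> s * ((a2 - a1) * (c i - 1))" using s a2
        by (intro mult_nonneg_nonneg mult_nonpos_nonpos) auto
      then show ?thesis unfolding us_def u_def by (simp add: algebra_simps)
    qed
    then have "(\<Sum>i<N. us) \<le> (\<Sum>i<N. u i)" by (intro sum_mono) auto
    then show ?thesis unfolding ub_def using N by (simp add: field_simps)
  qed
  obtain R where R: "mb = vs + s * R / (real N * m)" "R \<ge> 0"
     "R = 0 \<Longrightarrow> W = 0 \<and> (\<forall>i<N. z i = w (y i))"
  proof -
    have lam: "lam > 0" "2 * lam - real k \<ge> 1"
    proof -
      have "m * a1 \<ge> m * (1/2)" using m a1 by (intro mult_left_mono) auto
      then show "lam > 0" "2 * lam - real k \<ge> 1" unfolding lam_def m_def by auto
    qed
    define R1 where "R1 = (\<Sum>i<N. (norm (W - lam *\<^sub>R w (y i) + lam *\<^sub>R z i))\<^sup>2)"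
    define R where "R = (1/(2*lam)) * R1 + real N * (norm W)\<^sup>2 * (2*lam - real k) / (2*lam*real k)"
    have G: "(\<Sum>i<N. (W - lam *\<^sub>R w (y i)) \<bullet> z i) = - real N * lam + R"
      using geom[OF labels bal, of lam w z] lam kdvd k2 wn zn unfolding R_def R1_def W_def by simp
    have smx: "(\<Sum>j\<in>K - {y i}. x i j) = s * ((W - lam *\<^sub>R w (y i)) \<bullet> z i - m * b1)" if i: "i < N" for i
    proof -
      have "(\<Sum>j\<in>K - {y i}. x i j) = s * (\<Sum>j\<in>K - {y i}. w j \<bullet> z i) - real (card (K - {y i})) * (s * (a1 * c i + b1))"
        unfolding x_def by (simp add: sum_subtractf sum_distrib_left algebra_simps)
      also have "(\<Sum>j\<in>K - {y i}. w j \<bullet> z i) = W \<bullet> z i - c i"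
        using labels i unfolding W_def K_def c_def by (simp add: sum_diff1 inner_sum_left)
      finally show ?thesis unfolding cardK(2)[OF i] lam_def c_def
        by (simp add: algebra_simps inner_diff_left)
    qed
    have "(\<Sum>i<N. mu i) = (\<Sum>i<N. (s / m) * ((W - lam *\<^sub>R w (y i)) \<bullet> z i) - s * b1)"
      unfolding mu_def using smx m by (intro sum.cong) (auto simp: field_simps)
    also have "\<dots> = (s / m) * (\<Sum>i<N. (W - lam *\<^sub>R w (y i)) \<bullet> z i) - real N * s * b1"
      by (simp add: sum_subtractf sum_distrib_left)
    also have "\<dots> = (s / m) * (- real N * lam + R) - real N * s * b1"
      unfolding G ..
    finally have "mb = ((s / m) * (- real N * lam + R) - real N * s * b1) / real N" unfolding mb_def by simp
    also have "\<dots> = vs + s * R / (real N * m)"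
      unfolding vs_def lam_def m_def[symmetric] using N m by (simp add: field_simps)
    finally have RA: "mb = vs + s * R / (real N * m)" .
    have R1: "R1 \<ge> 0" unfolding R1_def by (intro sum_nonneg) auto
    have R2: "real N * (norm W)\<^sup>2 * (2*lam - real k) / (2*lam*real k) \<ge> 0"
      using lam k2 by (intro divide_nonneg_pos mult_nonneg_nonneg) auto
    have RB: "R \<ge> 0" unfolding R_def using R1 R2 lam by simp
    have RC: "W = 0 \<and> (\<forall>i<N. z i = w (y i))" if R0: "R = 0"
    proof -
      have h1: "R1 = 0" and h2: "real N * (norm W)\<^sup>2 * (2*lam - real k) / (2*lam*real k) = 0"
        using R1 R2 lam R0 unfolding R_def by (auto simp: add_nonneg_eq_0_iff)
      from h2 have W0: "W = 0" using N lam k2 by auto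
      have "\<forall>i\<in>{..<N}. (norm (W - lam *\<^sub>R w (y i) + lam *\<^sub>R z i))\<^sup>2 = 0"
        using h1 unfolding R1_def by (subst (asm) sum_nonneg_eq_0_iff) auto
      then have "\<forall>i<N. lam *\<^sub>R (z i - w (y i)) = 0" using W0 by (auto simp: algebra_simps)
      then show ?thesis using W0 lam by auto

    qed
    show thesis by (rule that[OF RA RB RC])
  qed
  have mbvs: "vs \<le> mb" using R s N m by simp
  have chain1: "(\<Sum>i<N. FF m (u i) (mu i)) / real N \<le> (\<Sum>i<N. tm i) / real N"
    using N by (intro divide_right_mono sum_mono step2) auto
  have chain3: "FF m us mb \<le> FF m ub mb" using step4 m by (intro FF_mono) auto
  have chain4: "FF m us vs \<le> FF m us mb" using mbvs m by (intro FF_mono) auto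
  show "FF (real k - 1) (s * (a2 - a1 + b2 - b1)) (- s * (1 / (real k - 1) + a1 + b1))
           \<le> gm_softmax_loss s a1 a2 b1 b2 k N y w z"
    unfolding loss using chain1 chain3 chain4 step3 unfolding m_def us_def vs_def by linarith
  assume eq: "gm_softmax_loss s a1 a2 b1 b2 k N y w z = FF (real k - 1) (s * (a2 - a1 + b2 - b1)) (- s * (1 / (real k - 1) + a1 + b1))"
  then have eq': "(\<Sum>i<N. tm i) / real N = FF m us vs" unfolding loss m_def us_def vs_def .
  have "mb = vs"
  proof (rule ccontr)
    assume "mb \<noteq> vs"
    then have "vs < mb" using mbvs by simp
    then have "FF m us vs < FF m us mb" using m by (intro FF_strict) auto
    then show False using chain1 chain3 step3 eq' by linarith
  qed
  then have "R = 0" using R s N m by simp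
  then have W0: "W = 0" and zw: "\<forall>i<N. z i = w (y i)" using R by auto
  have sumeq: "(\<Sum>i<N. FF m (u i) (mu i)) = (\<Sum>i<N. tm i)"
  proof -
    have "(\<Sum>i<N. FF m (u i) (mu i)) / real N = (\<Sum>i<N. tm i) / real N"
      using chain1 chain3 chain4 step3 eq' by linarith
    then show ?thesis using N by simp
  qed
  have termeq: "FF m (u i) (mu i) = tm i" if i: "i < N" for i
  proof -
    have "(\<Sum>i<N. tm i - FF m (u i) (mu i)) = 0" using sumeq by (simp add: sum_subtractf)
    moreover have "\<forall>i\<in>{..<N}. 0 \<le> tm i - FF m (u i) (mu i)" using step2 by auto
    ultimately have "\<forall>i\<in>{..<N}. tm i - FF m (u i) (mu i) = 0"
      using sum_nonneg_eq_0_iff[of "{..<N}" "\<lambda>i. tm i - FF m (u i) (mu i)"] by simp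
    then show ?thesis using i by auto
  qed
  have pair: "w j \<bullet> w (y i) = - 1 / m" if i: "i < N" and j: "j \<in> K - {y i}" for i j
  proof -
    define t where "t = mu i / s + a1 + b1"
    have ci: "c i = 1" unfolding c_def using zw i wn labels by (simp add: dot_square_norm)
    have all: "\<forall>j'\<in>K - {y i}. w j' \<bullet> w (y i) = t"
    proof
      fix j' assume j': "j' \<in> K - {y i}"
      have "x i j' = mu i" using step2eq[OF i termeq[OF i]] j' by blast
      then have "s * (w j' \<bullet> w (y i) - a1 - b1) = mu i" unfolding x_def ci using zw i by simp
      then show "w j' \<bullet> w (y i) = t" unfolding t_def using s by (simp add: field_simps)
    qed
    have "(\<Sum>j'\<in>K - {y i}. w j' \<bullet> w (y i)) = W \<bullet> w (y i) - w (y i) \<bullet> w (y i)"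
      using labels i unfolding W_def K_def by (simp add: sum_diff1 inner_sum_left)
    also have "\<dots> = -1" using W0 wn labels i by (simp add: dot_square_norm)
    finally have "(\<Sum>j'\<in>K - {y i}. w j' \<bullet> w (y i)) = -1" .
    moreover have "(\<Sum>j'\<in>K - {y i}. w j' \<bullet> w (y i)) = m * t"
      using all cardK(2)[OF i] by simp
    ultimately have "t = -1 / m" using m by (simp add: field_simps)
    then show ?thesis using all j by simp
  qed
  show "(\<forall>i\<in>{1..k}. \<forall>j\<in>{1..k}. i \<noteq> j \<longrightarrow> w i \<bullet> w j = - 1 / (real k - 1)) \<and> (\<forall>i<N. z i = w (y i))"
  proof (intro conjI ballI impI)
    fix p q assume p: "p \<in> {1..k}" and q: "q \<in> {1..k}" and pq: "p \<noteq> q"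
    have "card {i. i < N \<and> y i = p} \<ge> 1" using bal p Nk by simp
    then have "{i. i < N \<and> y i = p} \<noteq> {}" by (metis card.empty not_one_le_zero)
    then obtain i where i: "i < N" "y i = p" by blast
    have "w q \<bullet> w (y i) = - 1 / m" using pair[OF i(1)] q pq i(2) unfolding K_def by auto
    then show "w p \<bullet> w q = - 1 / (real k - 1)" using i(2) unfolding m_def by (simp add: inner_commute)
  qed (use zw in auto)
qed


lemma simplex_alg:
  fixes p r mm :: real
  assumes mm: "mm > 0" and r: "r^2 = 1/mm" and p: "p^2 = (mm+1)/mm"
  defines "q \<equiv> - (r + p) / mm"
  shows "2*p*q + q^2 * mm = - 1 / mm" "p^2 + 2*p*q + q^2 * mm = 1"
proof -
  have "2*p*q + q^2 * mm = (r^2 - p^2) / mm"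
    unfolding q_def using mm by (simp add: field_simps power2_eq_square)
  also have "\<dots> = - 1 / mm" using r p mm by (simp add: field_simps)
  finally show 1: "2*p*q + q^2 * mm = - 1 / mm" .
  have "p^2 = 1 + 1/mm" using p mm by (simp add: field_simps)
  then show "p^2 + 2*p*q + q^2 * mm = 1" using 1 by simp
qed


lemma simplex_exists:
  assumes k2: "2 \<le> k" and kd: "k \<le> DIM('a::euclidean_space) + 1"
  shows "\<exists>w0::nat \<Rightarrow> 'a. (\<forall>i\<in>{1..k}. norm (w0 i) = 1) \<and>
          (\<forall>i\<in>{1..k}. \<forall>j\<in>{1..k}. i \<noteq> j \<longrightarrow> w0 i \<bullet> w0 j = - 1 / (real k - 1))"
proof -
  define m' where "m' = k - 1"
  define mm where "mm = real k - 1"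
  have mm: "mm > 0" "real m' = mm" using k2 unfolding mm_def m'_def by (auto simp: of_nat_diff)
  have "m' \<le> card (Basis :: 'a set)" using kd unfolding m'_def by simp
  then obtain T where T: "T \<subseteq> (Basis :: 'a set)" "card T = m'" and fT: "finite T"
    by (rule obtain_subset_with_card_n)
  obtain f where f: "bij_betw f {1..m'} T" using ex_bij_betw_nat_finite_1[OF fT] unfolding T(2) by blast
  have fB: "f i \<in> Basis" if "i \<in> {1..m'}" for i using f T(1) that by (auto simp: bij_betw_def)
  have finj: "inj_on f {1..m'}" using f by (simp add: bij_betw_def)
  have bb: "f i \<bullet> f j = (if i = j then 1 else 0)" if ij: "i \<in> {1..m'}" "j \<in> {1..m'}" for i j
  proof (cases "i = j")
    case True
    have "f i \<in> Basis" by (rule fB[OF ij(1)])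
    then have "f i \<bullet> f i = 1" using inner_Basis[of "f i" "f i"] by presburger
    then show ?thesis using True by simp
  next
    case False
    then have ne: "f i \<noteq> f j" using finj ij unfolding inj_on_def by blast
    have "f i \<bullet> f j = 0" using inner_Basis[OF fB[OF ij(1)] fB[OF ij(2)]] ne by presburger
    then show ?thesis using False by simp
  qed
  define B where "B = (\<Sum>i\<in>{1..m'}. f i)"
  have Bb: "B \<bullet> f j = 1" "f j \<bullet> B = 1" if "j \<in> {1..m'}" for j
  proof -
    have "B \<bullet> f j = (\<Sum>i\<in>{1..m'}. if i = j then 1 else 0)"
      unfolding B_def inner_sum_left using bb that by (intro sum.cong) auto
    also have "\<dots> = 1" using that by simp
    finally show "B \<bullet> f j = 1" .
    then show "f j \<bullet> B = 1" by (simp add: inner_commute)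
  qed
  have BB: "B \<bullet> B = mm"
  proof -
    have "B \<bullet> B = (\<Sum>j\<in>{1..m'}. B \<bullet> f j)" unfolding B_def inner_sum_right by simp
    also have "\<dots> = (\<Sum>j\<in>{1..m'}. 1)" using Bb by (intro sum.cong) auto
    finally show ?thesis using mm by simp
  qed
  define r where "r = 1 / sqrt mm"
  define p where "p = sqrt ((mm + 1) / mm)"
  define q where "q = - (r + p) / mm"
  have r2: "r^2 = 1/mm" unfolding r_def using mm by (simp add: power_divide)
  have p2: "p^2 = (mm+1)/mm" unfolding p_def using mm by simp
  have A1: "2*p*q + q^2 * mm = - 1 / mm" "p^2 + 2*p*q + q^2 * mm = 1"
    using simplex_alg[OF mm(1) r2 p2] unfolding q_def by auto
  have rp: "r * (p + q * mm) = - 1 / mm"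
  proof -
    have "p + q * mm = - r" unfolding q_def using mm by (simp add: field_simps)
    then show ?thesis using r2 by (simp add: power2_eq_square)
  qed
  define w0 where "w0 i = (if i = k then r *\<^sub>R B else p *\<^sub>R f i + q *\<^sub>R B)" for i
  have K: "i \<in> {1..k} \<Longrightarrow> i \<noteq> k \<Longrightarrow> i \<in> {1..m'}" for i unfolding m'_def by auto
  have ipk: "w0 i \<bullet> w0 k = - 1 / mm" "w0 k \<bullet> w0 i = - 1 / mm" if "i \<in> {1..m'}" for i
  proof -
    have ik: "i \<noteq> k" using that unfolding m'_def by auto
    have "w0 i \<bullet> w0 k = r * (p * (f i \<bullet> B) + q * (B \<bullet> B))"
      unfolding w0_def using ik by (simp add: inner_add_left algebra_simps)
    also have "\<dots> = - 1 / mm" using Bb[OF that] BB rp by (simp add: algebra_simps)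
    finally show "w0 i \<bullet> w0 k = - 1 / mm" .
    then show "w0 k \<bullet> w0 i = - 1 / mm" by (simp add: inner_commute)
  qed
  have iij: "w0 i \<bullet> w0 j = p^2 * (f i \<bullet> f j) + 2*p*q + q^2 * mm" if "i \<in> {1..m'}" "j \<in> {1..m'}" for i j
  proof -
    have ik: "i \<noteq> k" "j \<noteq> k" using that unfolding m'_def by auto
    have "w0 i \<bullet> w0 j = p * p * (f i \<bullet> f j) + p * q * (f i \<bullet> B) + q * p * (B \<bullet> f j) + q * q * (B \<bullet> B)"
      unfolding w0_def using ik by (simp add: inner_add_left inner_add_right algebra_simps)
    then show ?thesis using Bb that BB by (simp add: power2_eq_square algebra_simps)
  qed
  have kk: "w0 k \<bullet> w0 k = 1"
  proof -
    have "w0 k \<bullet> w0 k = r * r * (B \<bullet> B)" unfolding w0_def by simp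
    also have "\<dots> = r^2 * mm" using BB by (simp add: power2_eq_square)
    finally show ?thesis using r2 mm by simp
  qed
  show ?thesis
  proof (intro exI conjI ballI impI)
    fix i assume i: "i \<in> {1..k}"
    show "norm (w0 i) = 1"
    proof (cases "i = k")
      case True then show ?thesis using kk by (simp add: norm_eq_1)
    next
      case False then have "i \<in> {1..m'}" using K i by auto
      then show ?thesis using iij[of i i] bb[of i i] A1 by (simp add: norm_eq_1)
    qed
  next
    fix i j assume i: "i \<in> {1..k}" and j: "j \<in> {1..k}" and ij: "i \<noteq> j"
    show "w0 i \<bullet> w0 j = - 1 / (real k - 1)"
    proof (cases "i = k")
      case True then show ?thesis using ipk(2)[of j] K[OF j] ij mm_def by auto
    next
      case False
      note i' = K[OF i False]
      show ?thesis
      proof (cases "j = k")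
        case True then show ?thesis using ipk(1)[OF i'] mm_def by auto
      next
        case False
        then show ?thesis using iij[OF i' K[OF j False]] bb[OF i' K[OF j False]] ij A1 mm_def by simp
      qed
    qed
  qed
qed


lemma simplex_loss:
  fixes k N :: nat and y :: "nat \<Rightarrow> nat" and s a1 a2 b1 b2 :: real and w z :: "nat \<Rightarrow> 'a::real_inner"
  assumes labels: "\<forall>i<N. y i \<in> {1..k}" and k2: "2 \<le> k" and N: "N > 0"
    and wn: "\<forall>c\<in>{1..k}. norm (w c) = 1"
    and sx: "\<forall>i\<in>{1..k}. \<forall>j\<in>{1..k}. i \<noteq> j \<longrightarrow> w i \<bullet> w j = - 1 / (real k - 1)"
    and zw: "\<forall>i<N. z i = w (y i)"
  shows "gm_softmax_loss s a1 a2 b1 b2 k N y w z = FF (real k - 1) (s * (a2 - a1 + b2 - b1)) (- s * (1 / (real k - 1) + a1 + b1))"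
proof -
  define m where "m = real k - 1"
  have m: "m > 0" using k2 unfolding m_def by auto
  define F where "F = FF (real k - 1) (s * (a2 - a1 + b2 - b1)) (- s * (1 / (real k - 1) + a1 + b1))"
  have tmq: "- ln (exp (s * (a1 * (w (y i) \<bullet> z i) + b1)) /
              (exp (s * (a2 * (w (y i) \<bullet> z i) + b2)) +
               (\<Sum>j\<in>{1..k} - {y i}. exp (s * (w j \<bullet> z i))))) = F" if i: "i < N" for i
  proof -
    have yi: "y i \<in> {1..k}" using labels i by auto
    have c1: "w (y i) \<bullet> z i = 1" using zw i wn yi by (simp add: dot_square_norm)
    have t: "w j \<bullet> z i = - 1 / m" if "j \<in> {1..k} - {y i}" for j
      using sx that yi zw i unfolding m_def by auto
    have card: "real (card ({1..k} - {y i})) = m" using yi k2 unfolding m_def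
      by (simp add: card_Diff_singleton of_nat_diff)
    have S: "(\<Sum>j\<in>{1..k} - {y i}. exp (s * (w j \<bullet> z i))) = m * exp (s * (- 1 / m))"
      using t card by simp
    define A where "A = exp (s * (a1 + b1))"
    define B where "B = exp (s * (a2 + b2)) + m * exp (s * (- 1 / m))"
    have A: "A > 0" unfolding A_def by simp
    have B: "B > 0" unfolding B_def using m by (intro add_pos_pos) auto
    have "exp (s * (a2 - a1 + b2 - b1)) = exp (s * (a2 + b2)) / A"
    proof -
      have "s * (a2 - a1 + b2 - b1) = s * (a2 + b2) - s * (a1 + b1)" by (simp add: algebra_simps)
      then show ?thesis unfolding A_def by (simp only: exp_diff)
    qed
    moreover have "exp (- s * (1 / m + a1 + b1)) = exp (s * (- 1 / m)) / A"
    proof -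
      have "- s * (1 / m + a1 + b1) = s * (- 1 / m) - s * (a1 + b1)" by (simp add: algebra_simps)
      then show ?thesis unfolding A_def by (simp only: exp_diff)
    qed
    ultimately have "exp (s * (a2 - a1 + b2 - b1)) + m * exp (- s * (1 / m + a1 + b1)) = B / A"
      unfolding B_def by (simp add: add_divide_distrib)
    then have F: "F = ln (B / A)" unfolding F_def FF_def m_def by simp
    have "- ln (A / B) = F" unfolding F using A B by (simp add: ln_div)
    then show ?thesis unfolding A_def B_def c1 S by simp
  qed
  have "gm_softmax_loss s a1 a2 b1 b2 k N y w z = (1 / real N) * (\<Sum>i<N. F)"
    unfolding gm_softmax_loss_def by (rule arg_cong[where f="\<lambda>t. (1 / real N) * t"], rule sum.cong[OF refl], rule tmq, simp)
  also have "\<dots> = F" using N by simp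
  finally show ?thesis unfolding F_def .
qed


lemma inner_abs_le_1: fixes a b :: "'a::real_inner" assumes "norm a = 1" "norm b = 1" shows "\<bar>a \<bullet> b\<bar> \<le> 1"
  using Cauchy_Schwarz_ineq2[of a b] assms by simp

lemma cm_set:
  fixes k :: nat and w :: "nat \<Rightarrow> 'a::real_inner"
  assumes k2: "2 \<le> k"
  shows "finite {w i \<bullet> w j | i j. i \<in> {1..k} \<and> j \<in> {1..k} \<and> i \<noteq> j}"
    "w 1 \<bullet> w 2 \<in> {w i \<bullet> w j | i j. i \<in> {1..k} \<and> j \<in> {1..k} \<and> i \<noteq> j}"
proof -
  have "{w i \<bullet> w j | i j. i \<in> {1..k} \<and> j \<in> {1..k} \<and> i \<noteq> j} \<subseteq> (\<lambda>p. w (fst p) \<bullet> w (snd p)) ` ({1..k} \<times> {1..k})"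
    by force
  then show "finite {w i \<bullet> w j | i j. i \<in> {1..k} \<and> j \<in> {1..k} \<and> i \<noteq> j}"
    by (rule finite_subset) simp
  show "w 1 \<bullet> w 2 \<in> {w i \<bullet> w j | i j. i \<in> {1..k} \<and> j \<in> {1..k} \<and> i \<noteq> j}"
    using k2 by force
qed

lemma cm_bound:
  fixes k :: nat and w :: "nat \<Rightarrow> 'a::real_inner"
  assumes k2: "2 \<le> k" and wn: "\<forall>c\<in>{1..k}. norm (w c) = 1"
  shows "class_margin k w \<le> arccos (- 1 / (real k - 1))"
proof -
  define S where "S = {w i \<bullet> w j | i j. i \<in> {1..k} \<and> j \<in> {1..k} \<and> i \<noteq> j}"
  define M where "M = Max S"
  define m where "m = real k - 1"
  define K where "K = {1..k}"
  define W where "W = (\<Sum>c\<in>K. w c)"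
  have m: "m \<ge> 1" using k2 unfolding m_def by auto
  have fS: "finite S" "S \<noteq> {}" using cm_set[OF k2, of w] unfolding S_def by auto
  have MS: "M \<in> S" unfolding M_def using fS by (rule Max_in)
  have le: "w i \<bullet> w j \<le> M" if "i \<in> K" "j \<in> K - {i}" for i j
    unfolding M_def using fS that unfolding S_def K_def by (intro Max_ge) blast+
  have M1: "M \<le> 1"
  proof -
    obtain i j where "M = w i \<bullet> w j" "i \<in> {1..k}" "j \<in> {1..k}" using MS unfolding S_def by blast
    then show ?thesis using inner_abs_le_1[of "w i" "w j"] wn by auto
  qed
  have "(\<Sum>i\<in>K. \<Sum>j\<in>K - {i}. w i \<bullet> w j) \<le> (\<Sum>i\<in>K. \<Sum>j\<in>K - {i}. M)"
    using le by (intro sum_mono) auto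
  also have "\<dots> = real k * m * M"
  proof -
    have "(\<Sum>j\<in>K - {i}. M) = m * M" if "i \<in> K" for i
    proof -
      have "card (K - {i}) = k - 1" using that unfolding K_def by (simp add: card_Diff_singleton)
      then have "real (card (K - {i})) = m" using k2 unfolding m_def by (simp add: of_nat_diff)
      then show ?thesis by simp
    qed
    then have "(\<Sum>i\<in>K. \<Sum>j\<in>K - {i}. M) = (\<Sum>i\<in>K. m * M)" by (intro sum.cong) auto
    then show ?thesis unfolding K_def by simp
  qed
  also have "(\<Sum>i\<in>K. \<Sum>j\<in>K - {i}. w i \<bullet> w j) = (\<Sum>i\<in>K. w i \<bullet> W - 1)"
  proof (rule sum.cong[OF refl])
    fix i assume i: "i \<in> K"
    have "(\<Sum>j\<in>K - {i}. w i \<bullet> w j) = (\<Sum>j\<in>K. w i \<bullet> w j) - w i \<bullet> w i"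
      using i unfolding K_def by (simp add: sum_diff1)
    also have "\<dots> = w i \<bullet> W - 1" using i wn unfolding W_def K_def by (simp add: inner_sum_right dot_square_norm)
    finally show "(\<Sum>j\<in>K - {i}. w i \<bullet> w j) = w i \<bullet> W - 1" .
  qed
  also have "(\<Sum>i\<in>K. w i \<bullet> W - 1) = W \<bullet> W - real k"
    unfolding W_def K_def by (simp add: sum_subtractf inner_sum_left)
  finally have "W \<bullet> W - real k \<le> real k * m * M" .
  moreover have "W \<bullet> W \<ge> 0" by simp
  ultimately have "- real k \<le> real k * (m * M)" by (simp only: mult.assoc)
  then have "real k * (-1) \<le> real k * (m * M)" by simp
  moreover have "real k > 0" using k2 by simp
  ultimately have "-1 \<le> m * M" by (rule mult_left_le_imp_le)
  then have M2: "- 1 / m \<le> M" using m by (simp add: field_simps)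
  have "arccos M \<le> arccos (- 1 / m)"
    by (rule arccos_le_arccos) (use M1 M2 m in \<open>auto simp: field_simps\<close>)
  then show ?thesis unfolding class_margin_def M_def S_def m_def .
qed


lemma msm_bound:
  fixes k N :: nat and y :: "nat \<Rightarrow> nat" and w z :: "nat \<Rightarrow> 'a::real_inner"
  assumes labels: "\<forall>i<N. y i \<in> {1..k}"
    and bal: "\<forall>c\<in>{1..k}. card {i. i < N \<and> y i = c} = N div k"
    and k2: "2 \<le> k" and Nk: "N div k \<ge> 1"
    and unit: "unit_config k N w z"
  shows "min_sample_margin k N y w z \<le> real k / (real k - 1)"
proof -
  define K where "K = {1..k}"
  define W where "W = (\<Sum>c\<in>K. w c)"
  define m where "m = real k - 1"
  have m: "m \<ge> 1" using k2 unfolding m_def by auto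
  have wn: "\<forall>c\<in>K. norm (w c) = 1" and zn: "\<forall>i<N. norm (z i) = 1"
    using unit unfolding unit_config_def K_def by auto
  have N: "N > 0" using Nk by (auto intro: ccontr)
  have nv: "(norm (real k *\<^sub>R w c - W))\<^sup>2 = real k ^ 2 - 2 * real k * (w c \<bullet> W) + W \<bullet> W" if "c \<in> K" for c
  proof -
    have "w c \<bullet> w c = 1" using wn that by (simp add: dot_square_norm)
    then show ?thesis unfolding power2_norm_eq_inner
      by (simp add: inner_diff_left inner_diff_right inner_commute power2_eq_square algebra_simps)
  qed
  obtain p where p: "p \<in> K" "(norm (real k *\<^sub>R w p - W))\<^sup>2 \<le> real k ^ 2"
  proof (rule ccontr)
    assume "\<not> thesis"
    then have gt: "\<forall>c\<in>K. real k ^ 2 < (norm (real k *\<^sub>R w c - W))\<^sup>2" using that by (meson not_le)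
    have "(\<Sum>c\<in>K. real k ^ 2) < (\<Sum>c\<in>K. (norm (real k *\<^sub>R w c - W))\<^sup>2)"
      using gt k2 unfolding K_def by (intro sum_strict_mono) auto
    also have "\<dots> = (\<Sum>c\<in>K. real k ^ 2 - 2 * real k * (w c \<bullet> W) + W \<bullet> W)"
      using nv by (intro sum.cong) auto
    also have "\<dots> = real k * real k ^ 2 - 2 * real k * (W \<bullet> W) + real k * (W \<bullet> W)"
      unfolding K_def W_def by (simp add: sum.distrib sum_subtractf inner_sum_left sum_distrib_left[symmetric])
    finally have "real k * real k ^ 2 < real k * real k ^ 2 - real k * (W \<bullet> W)"
      unfolding K_def by simp
    moreover have "real k * (W \<bullet> W) \<ge> 0" by simp
    ultimately show False by linarith
  qed
  have "card {i. i < N \<and> y i = p} \<ge> 1" using bal p Nk unfolding K_def by simp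
  then have "{i. i < N \<and> y i = p} \<noteq> {}" by (metis card.empty not_one_le_zero)
  then obtain i where i: "i < N" "y i = p" by blast
  define T where "T = (\<lambda>j. w j \<bullet> z i) ` (K - {p})"
  have cKp: "card (K - {p}) = k - 1" using p(1) unfolding K_def by (simp add: card_Diff_singleton)
  have "K - {p} \<noteq> {}"
  proof
    assume "K - {p} = {}"
    then have "card (K - {p}) = 0" by (simp only: card.empty)
    then show False using cKp k2 by simp
  qed
  then have fT: "finite T" "T \<noteq> {}" unfolding T_def K_def by auto
  have "(\<Sum>j\<in>K - {p}. w j \<bullet> z i) \<le> (\<Sum>j\<in>K - {p}. Max T)"
    unfolding T_def using fT unfolding T_def by (intro sum_mono Max_ge) auto
  also have "\<dots> = m * Max T"
  proof -
    from cKp have "real (card (K - {p})) = m" using k2 unfolding m_def by (simp add: of_nat_diff)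
    then show ?thesis by simp
  qed
  also have "(\<Sum>j\<in>K - {p}. w j \<bullet> z i) = W \<bullet> z i - w p \<bullet> z i"
    using p(1) unfolding W_def K_def by (simp add: sum_diff1 inner_sum_left)
  finally have mx: "W \<bullet> z i - w p \<bullet> z i \<le> m * Max T" .
  define v where "v = real k *\<^sub>R w p - W"
  have vz: "v \<bullet> z i \<le> real k"
  proof -
    have zz: "z i \<bullet> z i = 1" using zn i by (simp add: dot_square_norm)
    have "0 \<le> (norm (v - real k *\<^sub>R z i))\<^sup>2" by simp
    also have "\<dots> = (norm v)\<^sup>2 - 2 * real k * (v \<bullet> z i) + real k ^ 2"
      unfolding power2_norm_eq_inner using zz
      by (simp add: inner_diff_left inner_diff_right inner_commute power2_eq_square algebra_simps)
    finally have "2 * real k * (v \<bullet> z i) \<le> 2 * real k ^ 2" using p(2) unfolding v_def by linarith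
    then have "real k * (v \<bullet> z i) \<le> real k * real k" by (simp add: power2_eq_square)
    then show ?thesis using k2 by (simp add: mult_le_cancel_left_pos)
  qed
  have val: "w p \<bullet> z i - Max T \<le> real k / m"
  proof -
    have "m * (w p \<bullet> z i - Max T) \<le> m * (w p \<bullet> z i) - (W \<bullet> z i - w p \<bullet> z i)"
      using mx by (simp add: algebra_simps)
    also have "\<dots> = v \<bullet> z i" unfolding v_def m_def by (simp add: inner_diff_left algebra_simps)
    also have "\<dots> \<le> real k" by (rule vz)
    finally have "m * (w p \<bullet> z i - Max T) \<le> real k" .
    then show ?thesis using m by (simp add: field_simps)
  qed
  have "min_sample_margin k N y w z \<le> w (y i) \<bullet> z i - Max ((\<lambda>j. w j \<bullet> z i) ` ({1..k} - {y i}))"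
    unfolding min_sample_margin_def using i by (intro Min_le) auto
  also have "\<dots> = w p \<bullet> z i - Max T" unfolding T_def K_def i(2) ..
  also have "\<dots> \<le> real k / (real k - 1)" using val unfolding m_def .
  finally show ?thesis .
qed


theorem theorem3:
  fixes s a1 a2 b1 b2 :: real and k N :: nat and y :: "nat \<Rightarrow> nat"
  assumes dim: "DIM('a::euclidean_space) \<ge> 2"
    and k2: "2 \<le> k" and kd: "k \<le> DIM('a) + 1"
    and labels: "\<forall>i<N. y i \<in> {1..k}"
    and balanced: "k dvd N" "N div k \<ge> 1"
      "\<forall>c\<in>{1..k}. card {i. i < N \<and> y i = c} = N div k"
    and s: "s > 0" and a1: "a1 \<ge> 1/2" and a2: "a2 \<le> a1"
  shows
    "(\<forall>(w::nat \<Rightarrow> 'a) z. unit_config k N w z \<longrightarrow>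
        gm_softmax_loss s a1 a2 b1 b2 k N y w z
          \<ge> ln (exp (s * (a2 - a1 + b2 - b1))
                 + (real k - 1) * exp (- s * (1 / (real k - 1) + a1 + b1)))
        \<and> (gm_softmax_loss s a1 a2 b1 b2 k N y w z
              = ln (exp (s * (a2 - a1 + b2 - b1))
                 + (real k - 1) * exp (- s * (1 / (real k - 1) + a1 + b1)))
           \<longleftrightarrow> (\<forall>i\<in>{1..k}. \<forall>j\<in>{1..k}. i \<noteq> j \<longrightarrow> w i \<bullet> w j = - 1 / (real k - 1))
               \<and> (\<forall>i<N. z i = w (y i))))
     \<and> (\<forall>(w::nat \<Rightarrow> 'a) z. unit_config k N w z \<longrightarrow>
          class_margin k w \<le> arccos (- 1 / (real k - 1))
          \<and> min_sample_margin k N y w z \<le> real k / (real k - 1))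
     \<and> (\<forall>(w::nat \<Rightarrow> 'a) z. unit_config k N w z \<and>
          (\<forall>(w'::nat \<Rightarrow> 'a) z'. unit_config k N w' z' \<longrightarrow>
             gm_softmax_loss s a1 a2 b1 b2 k N y w z \<le> gm_softmax_loss s a1 a2 b1 b2 k N y w' z')
          \<longrightarrow> class_margin k w = arccos (- 1 / (real k - 1))
              \<and> min_sample_margin k N y w z = real k / (real k - 1))"
proof -
  define bd where "bd = ln (exp (s * (a2 - a1 + b2 - b1))
                 + (real k - 1) * exp (- s * (1 / (real k - 1) + a1 + b1)))"
  have bdF: "bd = FF (real k - 1) (s * (a2 - a1 + b2 - b1)) (- s * (1 / (real k - 1) + a1 + b1))"
    unfolding bd_def FF_def ..
  have N: "N > 0" using balanced(2) by (auto intro: ccontr)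
  note mb1 = main_bound(1)[OF labels balanced(3) balanced(1) k2 balanced(2) s a1 a2]
  note mb2 = main_bound(2)[OF labels balanced(3) balanced(1) k2 balanced(2) s a1 a2]
  have P1: "bd \<le> gm_softmax_loss s a1 a2 b1 b2 k N y w z \<and>
       (gm_softmax_loss s a1 a2 b1 b2 k N y w z = bd \<longleftrightarrow>
         (\<forall>i\<in>{1..k}. \<forall>j\<in>{1..k}. i \<noteq> j \<longrightarrow> w i \<bullet> w j = - 1 / (real k - 1)) \<and> (\<forall>i<N. z i = w (y i)))"
    if u: "unit_config k N w z" for w z :: "nat \<Rightarrow> 'a"
  proof (rule conjI, rule_tac [2] iffI)
    show "bd \<le> gm_softmax_loss s a1 a2 b1 b2 k N y w z" unfolding bdF by (rule mb1[OF u])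
  next
    assume "gm_softmax_loss s a1 a2 b1 b2 k N y w z = bd"
    then show "(\<forall>i\<in>{1..k}. \<forall>j\<in>{1..k}. i \<noteq> j \<longrightarrow> w i \<bullet> w j = - 1 / (real k - 1)) \<and> (\<forall>i<N. z i = w (y i))"
      unfolding bdF by (rule mb2[OF u])
  next
    assume h: "(\<forall>i\<in>{1..k}. \<forall>j\<in>{1..k}. i \<noteq> j \<longrightarrow> w i \<bullet> w j = - 1 / (real k - 1)) \<and> (\<forall>i<N. z i = w (y i))"
    have wn: "\<forall>c\<in>{1..k}. norm (w c) = 1" using u unfolding unit_config_def by auto
    show "gm_softmax_loss s a1 a2 b1 b2 k N y w z = bd"
      unfolding bdF using simplex_loss[OF labels k2 N wn] h by blast
  qed
  have P2: "class_margin k w \<le> arccos (- 1 / (real k - 1)) \<and> min_sample_margin k N y w z \<le> real k / (real k - 1)"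
    if u: "unit_config k N w z" for w z :: "nat \<Rightarrow> 'a"
  proof
    have wn: "\<forall>c\<in>{1..k}. norm (w c) = 1" using u unfolding unit_config_def by auto
    show "class_margin k w \<le> arccos (- 1 / (real k - 1))" by (rule cm_bound[OF k2 wn])
    show "min_sample_margin k N y w z \<le> real k / (real k - 1)"
      by (rule msm_bound[OF labels balanced(3) k2 balanced(2) u])
  qed
  have P3: "class_margin k w = arccos (- 1 / (real k - 1)) \<and> min_sample_margin k N y w z = real k / (real k - 1)"
    if u: "unit_config k N w z" and mn: "\<forall>(w'::nat \<Rightarrow> 'a) z'. unit_config k N w' z' \<longrightarrow>
             gm_softmax_loss s a1 a2 b1 b2 k N y w z \<le> gm_softmax_loss s a1 a2 b1 b2 k N y w' z'"
    for w z :: "nat \<Rightarrow> 'a"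
  proof -
    obtain w0 :: "nat \<Rightarrow> 'a" where w0: "\<forall>i\<in>{1..k}. norm (w0 i) = 1"
      "\<forall>i\<in>{1..k}. \<forall>j\<in>{1..k}. i \<noteq> j \<longrightarrow> w0 i \<bullet> w0 j = - 1 / (real k - 1)"
      using simplex_exists[OF k2 kd] by blast
    define z0 where "z0 i = w0 (y i)" for i
    have u0: "unit_config k N w0 z0" unfolding unit_config_def z0_def using w0(1) labels by auto
    have "gm_softmax_loss s a1 a2 b1 b2 k N y w0 z0 = bd" using P1[OF u0] w0(2) unfolding z0_def by auto
    then have "gm_softmax_loss s a1 a2 b1 b2 k N y w z \<le> bd" using mn u0 by metis
    then have "gm_softmax_loss s a1 a2 b1 b2 k N y w z = bd" using P1[OF u] by linarith
    then have sx: "\<forall>i\<in>{1..k}. \<forall>j\<in>{1..k}. i \<noteq> j \<longrightarrow> w i \<bullet> w j = - 1 / (real k - 1)"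
      and zw: "\<forall>i<N. z i = w (y i)" using P1[OF u] by auto
    have wn: "\<forall>c\<in>{1..k}. norm (w c) = 1" using u unfolding unit_config_def by auto
    have S: "{w i \<bullet> w j | i j. i \<in> {1..k} \<and> j \<in> {1..k} \<and> i \<noteq> j} = {- 1 / (real k - 1)}"
    proof
      show "{w i \<bullet> w j | i j. i \<in> {1..k} \<and> j \<in> {1..k} \<and> i \<noteq> j} \<subseteq> {- 1 / (real k - 1)}"
        using sx by auto
      show "{- 1 / (real k - 1)} \<subseteq> {w i \<bullet> w j | i j. i \<in> {1..k} \<and> j \<in> {1..k} \<and> i \<noteq> j}"
        using cm_set(2)[OF k2, of w] sx k2 by auto
    qed
    have cm: "class_margin k w = arccos (- 1 / (real k - 1))" unfolding class_margin_def S by simp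
    have val: "w (y i) \<bullet> z i - Max ((\<lambda>j. w j \<bullet> z i) ` ({1..k} - {y i})) = real k / (real k - 1)"
      if i: "i < N" for i
    proof -
      have yi: "y i \<in> {1..k}" using labels i by auto
      have ne: "{1..k} - {y i} \<noteq> {}"
      proof
        assume "{1..k} - {y i} = {}"
        then have "card ({1..k} - {y i}) = 0" by (simp only: card.empty)
        moreover have "card ({1..k} - {y i}) = k - 1" using yi by (simp add: card_Diff_singleton)
        ultimately show False using k2 by linarith
      qed
      have img: "(\<lambda>j. w j \<bullet> z i) ` ({1..k} - {y i}) = {- 1 / (real k - 1)}"
        using ne sx yi zw i by auto
      have c1: "w (y i) \<bullet> z i = 1" using zw i wn yi by (simp add: dot_square_norm)
      have "real k - 1 > 0" using k2 by simp
      then show ?thesis unfolding img c1 by (simp add: field_simps)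
    qed
    have "(\<lambda>i. w (y i) \<bullet> z i - Max ((\<lambda>j. w j \<bullet> z i) ` ({1..k} - {y i}))) ` {..<N} = {real k / (real k - 1)}"
      using val N by auto
    then have "min_sample_margin k N y w z = real k / (real k - 1)"
      unfolding min_sample_margin_def by simp
    then show ?thesis using cm by simp
  qed
  show ?thesis using P1 P2 P3 unfolding bd_def by blast
qed


end
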